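(* Let $P$ be a prime and $D\ge1$. Let $g,r:\mathbb{Z}_P\to\mathbb{R}$ satisfy $\sum_{b\in\mathbb{Z}_P}g(b)=0$, $\sum_b|g(b)|^2=1$, $\sum_b|r(b)|^2=1$, and $C_{g,r}:=\sum_{v\in\mathbb{Z}_P}\mathcal{F}_1[g](v)\overline{\mathcal{F}_1[r](v)}\neq0$. Then for every function $f:\mathbb{Z}_P^D\to\mathbb{R}$ and every $\mathbf{x}\in\mathbb{Z}_P^D$, $$f(\mathbf{x})=C_{g,r}^{-1}\,\mathcal{S}\big[\mathcal{R}[f]\big](\mathbf{x}).$$
   Context: $\mathbb{Z}_P=\{0,\dots,P-1\}$ with arithmetic mod $P$. $\mathcal{F}_1[h](v)=P^{-1/2}\sum_{b\in\mathbb{Z}_P}h(b)e^{-2\pi i vb/P}$. The discrete ridgelet transform is $\mathcal{R}[f](\mathbf{a},b)=P^{-D/2}\sum_{\mathbf{x}\in\mathbb{Z}_P^D}f(\mathbf{x})\,r((\mathbf{a}^\top\mathbf{x}-b)\bmod P)$, and for $w:\mathbb{Z}_P^D\times\mathbb{Z}_P\to\mathbb{C}$ the discretized neural network is $\mathcal{S}[w](\mathbf{x})=P^{-D/2}\sum_{\mathbf{a}\in\mathbb{Z}_P^D,\,b\in\mathbb{Z}_P}w(\mathbf{a},b)\,g((\mathbf{a}^\top\mathbf{x}-b)\bmod P)$. *)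

theory Defs
  imports "HOL-Analysis.Analysis"
begin

text \<open>Z_P is represented as the integers {0..<P}; Z_P^D as functions
  nat => int that map each index i < D into Z_P (extensional: undefined outside {..<D}).\<close>

definition ZP :: "nat \<Rightarrow> int set" where
  "ZP P = {0..<int P}"

definition ZPD :: "nat \<Rightarrow> nat \<Rightarrow> (nat \<Rightarrow> int) set" where
  "ZPD P D = PiE {..<D} (\<lambda>_. ZP P)"

definition dotp :: "nat \<Rightarrow> (nat \<Rightarrow> int) \<Rightarrow> (nat \<Rightarrow> int) \<Rightarrow> int" where
  "dotp D a x = (\<Sum>i<D. a i * x i)"

definition F1 :: "nat \<Rightarrow> (int \<Rightarrow> real) \<Rightarrow> int \<Rightarrow> complex" where
  "F1 P h v = complex_of_real (1 / sqrt (real P)) *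
     (\<Sum>b\<in>ZP P. complex_of_real (h b) *
        exp (- (2 * of_real pi * \<i> * of_int v * of_int b / of_nat P)))"

definition ridgelet :: "nat \<Rightarrow> nat \<Rightarrow> (int \<Rightarrow> real) \<Rightarrow> ((nat \<Rightarrow> int) \<Rightarrow> real)
    \<Rightarrow> (nat \<Rightarrow> int) \<Rightarrow> int \<Rightarrow> real" where
  "ridgelet P D r f a b = (1 / sqrt (real P) ^ D) *
     (\<Sum>x\<in>ZPD P D. f x * r ((dotp D a x - b) mod int P))"

definition Snet :: "nat \<Rightarrow> nat \<Rightarrow> (int \<Rightarrow> real) \<Rightarrow> ((nat \<Rightarrow> int) \<Rightarrow> int \<Rightarrow> complex)
    \<Rightarrow> (nat \<Rightarrow> int) \<Rightarrow> complex" where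
  "Snet P D g w x = complex_of_real (1 / sqrt (real P) ^ D) *
     (\<Sum>a\<in>ZPD P D. \<Sum>b\<in>ZP P. w a b * complex_of_real (g ((dotp D a x - b) mod int P)))"

definition Cgr :: "nat \<Rightarrow> (int \<Rightarrow> real) \<Rightarrow> (int \<Rightarrow> real) \<Rightarrow> complex" where
  "Cgr P g r = (\<Sum>v\<in>ZP P. F1 P g v * cnj (F1 P r v))"

end

theory Submission
  imports Defs
begin

lemma root_sum:
  fixes P :: nat and k :: int
  assumes P: "P > 0" and nd: "\<not> int P dvd k"
  shows "(\<Sum>v\<in>ZP P. exp (2 * of_real pi * \<i> * of_int v * of_int k / of_nat P)) = (0::complex)"
proof -
  define w where "w = cis (2 * pi * of_int k / real P)"
  have ZPe: "ZP P = int ` {..<P}" unfolding ZP_def by (simp add: atLeast0LessThan[symmetric] image_int_atLeastLessThan)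
  have 1: "(\<Sum>v\<in>ZP P. exp (2 * of_real pi * \<i> * of_int v * of_int k / of_nat P)) =
        (\<Sum>v<P. exp (2 * of_real pi * \<i> * of_int (int v) * of_int k / of_nat P))"
    unfolding ZPe by (subst sum.reindex) (auto simp: inj_on_def)
  have 2: "(\<Sum>v<P. exp (2 * of_real pi * \<i> * of_int (int v) * of_int k / of_nat P)) = (\<Sum>v<P. w ^ v)"
  proof (intro sum.cong refl)
    fix v assume "v \<in> {..<P}"
    have "w ^ v = exp (of_nat v * (\<i> * complex_of_real (2 * pi * of_int k / real P)))"
      unfolding w_def cis_conv_exp exp_of_nat_mult ..
    also have "\<dots> = exp (2 * of_real pi * \<i> * of_int (int v) * of_int k / of_nat P)"
      by (intro arg_cong[where f=exp]) (simp add: field_simps)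
    finally show "exp (2 * of_real pi * \<i> * of_int (int v) * of_int k / of_nat P) = w ^ v" by (rule sym)
  qed
  have 3: "w \<noteq> 1"
  proof
    assume "w = 1"
    then obtain n :: int where "2 * pi * of_int k / real P = 2 * pi * of_int n"
      by (auto simp: w_def complex_eq_iff cos_one_2pi_int)
    with P have "of_int k = real P * of_int n" by (simp add: field_simps)
    then have "k = int P * n" by (metis of_int_eq_iff of_int_mult of_int_of_nat_eq)
    with nd show False by simp
  qed
  have 4: "(\<Sum>v<P. w ^ v) = (w ^ P - 1) / (w - 1)" using 3 by (subst geometric_sum) auto
  have "w ^ P = cis (real P * (2 * pi * of_int k / real P))" unfolding w_def by (rule Complex.DeMoivre)
  also have "\<dots> = cis (2 * pi * of_int k)" using P by simp
  also have "\<dots> = 1" by (rule cis_multiple_2pi) simp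
  finally show ?thesis using 1 2 4 by simp
qed

lemma card_ZP[simp]: "card (ZP P) = P" and finite_ZP[simp]: "finite (ZP P)"
  unfolding ZP_def by auto

lemma root_sum2:
  fixes P :: nat and b c :: int
  assumes P: "P > 0" and bc: "b \<in> ZP P" "c \<in> ZP P"
  shows "(\<Sum>v\<in>ZP P. exp (2 * of_real pi * \<i> * of_int v * of_int (c - b) / of_nat P)) =
     (if b = c then of_nat P else (0::complex))"
proof (cases "b = c")
  case True then show ?thesis by simp
next
  case False
  have "\<not> int P dvd (c - b)"
  proof
    assume "int P dvd (c - b)"
    then have "\<bar>int P\<bar> \<le> \<bar>c - b\<bar>" using False by (intro dvd_imp_le_int) auto
    with bc show False by (auto simp: ZP_def)
  qed
  with root_sum[OF P this] False show ?thesis by simp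
qed

lemma parseval:
  fixes P :: nat and g r :: "int \<Rightarrow> real"
  assumes P: "P > 0"
  shows "Cgr P g r = complex_of_real (\<Sum>b\<in>ZP P. g b * r b)"
proof -
  define E where "E v k = exp (2 * of_real pi * \<i> * of_int v * of_int k / of_nat P)" for v k :: int
  have F: "F1 P g v * cnj (F1 P r v) = complex_of_real (1 / real P) *
     (\<Sum>b\<in>ZP P. \<Sum>c\<in>ZP P. complex_of_real (g b * r c) * E v (c - b))" for v
  proof -
    have cj: "cnj (F1 P r v) = complex_of_real (1 / sqrt (real P)) *
       (\<Sum>c\<in>ZP P. complex_of_real (r c) * exp (2 * of_real pi * \<i> * of_int v * of_int c / of_nat P))"
      unfolding F1_def by (simp add: exp_cnj)
    have e: "exp (- (2 * of_real pi * \<i> * of_int v * of_int b / of_nat P)) *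
        exp (2 * of_real pi * \<i> * of_int v * of_int c / of_nat P) = E v (c - b)" for b c
      unfolding E_def mult_exp_exp using P by (intro arg_cong[where f=exp]) (simp add: field_simps)
    have "F1 P g v * cnj (F1 P r v) = complex_of_real (1 / sqrt (real P)) * complex_of_real (1 / sqrt (real P)) *
      ((\<Sum>b\<in>ZP P. complex_of_real (g b) * exp (- (2 * of_real pi * \<i> * of_int v * of_int b / of_nat P))) *
       (\<Sum>c\<in>ZP P. complex_of_real (r c) * exp (2 * of_real pi * \<i> * of_int v * of_int c / of_nat P)))"
      unfolding cj by (simp add: F1_def mult_ac)
    also have "complex_of_real (1 / sqrt (real P)) * complex_of_real (1 / sqrt (real P)) = complex_of_real (1 / real P)"
      using P by (simp flip: of_real_mult)
    also have "(\<Sum>b\<in>ZP P. complex_of_real (g b) * exp (- (2 * of_real pi * \<i> * of_int v * of_int b / of_nat P))) *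
       (\<Sum>c\<in>ZP P. complex_of_real (r c) * exp (2 * of_real pi * \<i> * of_int v * of_int c / of_nat P))
       = (\<Sum>b\<in>ZP P. \<Sum>c\<in>ZP P. complex_of_real (g b * r c) * E v (c - b))"
      unfolding sum_product by (intro sum.cong refl) (simp flip: e add: mult_ac)
    finally show ?thesis .
  qed
  have "Cgr P g r = complex_of_real (1 / real P) *
     (\<Sum>b\<in>ZP P. \<Sum>c\<in>ZP P. complex_of_real (g b * r c) * (\<Sum>v\<in>ZP P. E v (c - b)))"
  proof -
    have "Cgr P g r = complex_of_real (1 / real P) *
     (\<Sum>v\<in>ZP P. \<Sum>b\<in>ZP P. \<Sum>c\<in>ZP P. complex_of_real (g b * r c) * E v (c - b))"
      unfolding Cgr_def F by (rule sum_distrib_left[symmetric])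
    also have "(\<Sum>v\<in>ZP P. \<Sum>b\<in>ZP P. \<Sum>c\<in>ZP P. complex_of_real (g b * r c) * E v (c - b))
       = (\<Sum>b\<in>ZP P. \<Sum>v\<in>ZP P. \<Sum>c\<in>ZP P. complex_of_real (g b * r c) * E v (c - b))"
      by (rule sum.swap)
    also have "\<dots> = (\<Sum>b\<in>ZP P. \<Sum>c\<in>ZP P. \<Sum>v\<in>ZP P. complex_of_real (g b * r c) * E v (c - b))"
      by (intro sum.cong refl sum.swap)
    also have "\<dots> = (\<Sum>b\<in>ZP P. \<Sum>c\<in>ZP P. complex_of_real (g b * r c) * (\<Sum>v\<in>ZP P. E v (c - b)))"
      by (intro sum.cong refl sum_distrib_left[symmetric])
    finally show ?thesis .
  qed
  also have "\<dots> = complex_of_real (1 / real P) *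
     (\<Sum>b\<in>ZP P. \<Sum>c\<in>ZP P. if b = c then complex_of_real (g b * r c) * of_nat P else 0)"
    using root_sum2[OF P] unfolding E_def by (intro arg_cong2[where f="(*)"] sum.cong refl) auto
  also have "\<dots> = complex_of_real (\<Sum>b\<in>ZP P. g b * r b)"
    using P by (simp add: sum_distrib_left)
  finally show ?thesis .
qed


lemma ZP_ndvd:
  assumes "b \<in> ZP P" "c \<in> ZP P" "b \<noteq> c"
  shows "\<not> int P dvd (c - b)"
proof
  assume "int P dvd (c - b)"
  then have "\<bar>int P\<bar> \<le> \<bar>c - b\<bar>" using assms(3) by (intro dvd_imp_le_int) auto
  with assms show False by (auto simp: ZP_def)
qed

lemma mod_in_ZP: "P > 0 \<Longrightarrow> t mod int P \<in> ZP P"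
  by (simp add: ZP_def)

lemma shift_sum:
  fixes h :: "int \<Rightarrow> 'a::comm_monoid_add"
  assumes p: "prime P" and nd: "\<not> int P dvd d"
  shows "(\<Sum>t\<in>ZP P. h ((s + t * d) mod int P)) = (\<Sum>t\<in>ZP P. h t)"
proof -
  have P: "P > 0" using p prime_gt_0_nat by blast
  have pi: "prime (int P)" using p by simp
  define f where "f t = (s + t * d) mod int P" for t
  have inj: "inj_on f (ZP P)"
  proof (rule inj_onI)
    fix t1 t2 assume t: "t1 \<in> ZP P" "t2 \<in> ZP P" and e: "f t1 = f t2"
    have "int P dvd (s + t1 * d) - (s + t2 * d)"
      using e unfolding f_def by (simp add: mod_eq_dvd_iff)
    then have "int P dvd (t1 - t2) * d" by (simp add: algebra_simps)
    then have "int P dvd (t1 - t2)" using nd pi prime_dvd_mult_iff by blast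
    then show "t1 = t2" using ZP_ndvd[OF t(2) t(1)] by (cases "t1 = t2") (auto simp: dvd_diff_commute)
  qed
  have im: "f ` ZP P = ZP P"
    using P by (intro endo_inj_surj inj) (auto simp: f_def mod_in_ZP)
  have "(\<Sum>t\<in>ZP P. h (f t)) = (\<Sum>t\<in>f ` ZP P. h t)"
    using inj by (simp add: sum.reindex)
  then show ?thesis using im by (simp add: f_def)
qed


lemma sum_upd:
  fixes a e :: "nat \<Rightarrow> int"
  assumes "j < D"
  shows "(\<Sum>i<D. (a(j := u)) i * e i) = (\<Sum>i<D. a i * e i) + (u - a j) * e j"
proof -
  have "(\<Sum>i<D. (a(j := u)) i * e i) = u * e j + (\<Sum>i\<in>{..<D} - {j}. a i * e i)"
    using assms by (subst sum.remove[of _ j]) (auto intro!: sum.cong)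
  moreover have "(\<Sum>i<D. a i * e i) = a j * e j + (\<Sum>i\<in>{..<D} - {j}. a i * e i)"
    using assms by (subst sum.remove[of _ j]) auto
  ultimately show ?thesis by (simp add: algebra_simps)
qed

lemma avg:
  fixes K :: "int \<Rightarrow> real"
  assumes p: "prime P" and x: "x \<in> ZPD P D" and y: "y \<in> ZPD P D" and xy: "x \<noteq> y"
    and K0: "(\<Sum>t\<in>ZP P. K t) = 0"
  shows "(\<Sum>a\<in>ZPD P D. K ((dotp D a y - dotp D a x) mod int P)) = 0"
proof -
  have P: "P > 0" using p prime_gt_0_nat by blast
  obtain j where j: "j < D" "x j \<noteq> y j"
    using PiE_ext[of x "{..<D}" "\<lambda>_. ZP P" y] x y xy unfolding ZPD_def by auto
  have xj: "x j \<in> ZP P" and yj: "y j \<in> ZP P" using x y j unfolding ZPD_def by (auto intro: PiE_mem)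
  define d where "d = y j - x j"
  have nd: "\<not> int P dvd d" unfolding d_def using ZP_ndvd[OF xj yj j(2)] .
  define e where "e i = y i - x i" for i
  define phi where "phi a = (\<Sum>i<D. a i * e i)" for a :: "nat \<Rightarrow> int"
  have phi: "dotp D a y - dotp D a x = phi a" for a
    unfolding dotp_def phi_def e_def by (simp add: sum_subtractf right_diff_distrib)
  define sg where "sg c a = a(j := (a j + c) mod int P)" for c :: int and a :: "nat \<Rightarrow> int"
  define tu where "tu c a = a(j := (a j - c) mod int P)" for c :: int and a :: "nat \<Rightarrow> int"
  have aj: "a j \<in> ZP P" if "a \<in> ZPD P D" for a using that j unfolding ZPD_def by (auto intro: PiE_mem)
  have sgZ: "sg c a \<in> ZPD P D" if "a \<in> ZPD P D" for a c
    using that j P unfolding sg_def ZPD_def by (auto simp: PiE_iff mod_in_ZP extensional_def)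
  have tuZ: "tu c a \<in> ZPD P D" if "a \<in> ZPD P D" for a c
    using that j P unfolding tu_def ZPD_def by (auto simp: PiE_iff mod_in_ZP extensional_def)
  have ts: "tu c (sg c a) = a" if "a \<in> ZPD P D" for a c
  proof -
    have "((a j + c) mod int P - c) mod int P = a j"
      using aj[OF that] by (simp add: mod_diff_left_eq ZP_def)
    then show ?thesis unfolding tu_def sg_def by auto
  qed
  have st: "sg c (tu c a) = a" if "a \<in> ZPD P D" for a c
  proof -
    have "((a j - c) mod int P + c) mod int P = a j"
      using aj[OF that] by (simp add: mod_add_left_eq ZP_def)
    then show ?thesis unfolding tu_def sg_def by auto
  qed
  have phisg: "phi (sg c a) mod int P = (phi a + c * d) mod int P" for a c
  proof -
    have "phi (sg c a) = phi a + ((a j + c) mod int P - a j) * d"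
      unfolding phi_def sg_def using sum_upd[OF j(1)] by (simp add: e_def d_def)
    also have "(a j + c) mod int P = a j + c - ((a j + c) div int P) * int P"
      by (simp add: minus_div_mult_eq_mod)
    finally have "phi (sg c a) = (phi a + c * d) + (- ((a j + c) div int P) * d) * int P"
      by (simp add: algebra_simps)
    then show ?thesis by (simp only: mod_mult_self1)
  qed
  define X where "X = (\<Sum>a\<in>ZPD P D. K (phi a mod int P))"
  have Xc: "X = (\<Sum>a\<in>ZPD P D. K ((phi a + c * d) mod int P))" for c
  proof -
    have "(\<Sum>a\<in>ZPD P D. K ((phi a + c * d) mod int P)) = (\<Sum>a\<in>ZPD P D. K (phi (sg c a) mod int P))"
      by (simp add: phisg)
    also have "\<dots> = X" unfolding X_def
      by (rule sum.reindex_bij_witness[where i="tu c" and j="sg c"]) (auto simp: ts st sgZ tuZ)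
    finally show ?thesis by simp
  qed
  have "real P * X = (\<Sum>c\<in>ZP P. X)" by simp
  also have "\<dots> = (\<Sum>c\<in>ZP P. \<Sum>a\<in>ZPD P D. K ((phi a + c * d) mod int P))"
    using Xc by simp
  also have "\<dots> = (\<Sum>a\<in>ZPD P D. \<Sum>c\<in>ZP P. K ((phi a + c * d) mod int P))"
    by (rule sum.swap)
  also have "\<dots> = 0"
  proof (rule sum.neutral, rule ballI)
    fix a show "(\<Sum>c\<in>ZP P. K ((phi a + c * d) mod int P)) = 0"
      using shift_sum[OF p nd, of K "phi a"] K0 by simp
  qed
  finally have "X = 0" using P by simp
  then show ?thesis unfolding X_def phi .
qed


lemma main_real:
  fixes g r :: "int \<Rightarrow> real" and f :: "(nat \<Rightarrow> int) \<Rightarrow> real"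
  assumes p: "prime P" and g0: "(\<Sum>b\<in>ZP P. g b) = 0" and x: "x \<in> ZPD P D"
  shows "(1 / sqrt (real P) ^ D) * (\<Sum>a\<in>ZPD P D. \<Sum>b\<in>ZP P. ridgelet P D r f a b * g ((dotp D a x - b) mod int P))
     = f x * (\<Sum>b\<in>ZP P. g b * r b)"
proof -
  have P: "P > 0" using p prime_gt_0_nat by blast
  have P1: "P > 1" using p prime_gt_1_nat by blast
  define cD where "cD = 1 / sqrt (real P) ^ D"
  define G where "G = (\<Sum>b\<in>ZP P. g b * r b)"
  define K where "K t = (\<Sum>c\<in>ZP P. r ((t + c) mod int P) * g c)" for t
  have finD: "finite (ZPD P D)" unfolding ZPD_def by (simp add: finite_PiE)
  have cardD: "card (ZPD P D) = P ^ D" unfolding ZPD_def by (simp add: card_PiE)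
  have nd1: "\<not> int P dvd (-1)" using P1 by simp
  have T: "(\<Sum>b\<in>ZP P. r ((dotp D a y - b) mod int P) * g ((dotp D a x - b) mod int P))
       = K ((dotp D a y - dotp D a x) mod int P)" for a y
  proof -
    define s where "s = dotp D a x"
    define h where "h c = r ((dotp D a y - s + c) mod int P) * g c" for c
    have "(\<Sum>b\<in>ZP P. r ((dotp D a y - b) mod int P) * g ((dotp D a x - b) mod int P))
        = (\<Sum>b\<in>ZP P. h ((s + b * (-1)) mod int P))"
      unfolding h_def s_def by (intro sum.cong refl) (simp add: mod_add_right_eq)
    also have "\<dots> = (\<Sum>b\<in>ZP P. h b)" by (rule shift_sum[OF p nd1])
    also have "\<dots> = K ((dotp D a y - dotp D a x) mod int P)"
      unfolding h_def K_def s_def by (intro sum.cong refl) (simp add: mod_add_left_eq)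
    finally show ?thesis .
  qed
  have K0: "(\<Sum>t\<in>ZP P. K t) = 0"
  proof -
    have "(\<Sum>t\<in>ZP P. K t) = (\<Sum>c\<in>ZP P. g c * (\<Sum>t\<in>ZP P. r ((c + t * 1) mod int P)))"
      unfolding K_def by (subst sum.swap) (simp add: sum_distrib_left mult_ac add.commute)
    also have "\<dots> = (\<Sum>c\<in>ZP P. g c * (\<Sum>t\<in>ZP P. r t))"
      using shift_sum[OF p, of 1 r] P1 by simp
    also have "\<dots> = 0" using g0 by (simp add: sum_distrib_right[symmetric])
    finally show ?thesis .
  qed
  have KG: "K 0 = G" unfolding K_def G_def by (intro sum.cong refl) (auto simp: ZP_def mult.commute)
  have "cD * (\<Sum>a\<in>ZPD P D. \<Sum>b\<in>ZP P. ridgelet P D r f a b * g ((dotp D a x - b) mod int P))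
     = cD * cD * (\<Sum>a\<in>ZPD P D. \<Sum>b\<in>ZP P. \<Sum>y\<in>ZPD P D. f y * (r ((dotp D a y - b) mod int P) * g ((dotp D a x - b) mod int P)))"
    unfolding ridgelet_def cD_def[symmetric] by (simp add: sum_distrib_left sum_distrib_right mult_ac)
  also have "(\<Sum>a\<in>ZPD P D. \<Sum>b\<in>ZP P. \<Sum>y\<in>ZPD P D. f y * (r ((dotp D a y - b) mod int P) * g ((dotp D a x - b) mod int P)))
     = (\<Sum>y\<in>ZPD P D. f y * (\<Sum>a\<in>ZPD P D. K ((dotp D a y - dotp D a x) mod int P)))"
  proof -
    have "(\<Sum>a\<in>ZPD P D. \<Sum>b\<in>ZP P. \<Sum>y\<in>ZPD P D. f y * (r ((dotp D a y - b) mod int P) * g ((dotp D a x - b) mod int P)))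
      = (\<Sum>a\<in>ZPD P D. \<Sum>y\<in>ZPD P D. \<Sum>b\<in>ZP P. f y * (r ((dotp D a y - b) mod int P) * g ((dotp D a x - b) mod int P)))"
      by (intro sum.cong refl sum.swap)
    also have "\<dots> = (\<Sum>y\<in>ZPD P D. \<Sum>a\<in>ZPD P D. \<Sum>b\<in>ZP P. f y * (r ((dotp D a y - b) mod int P) * g ((dotp D a x - b) mod int P)))"
      by (rule sum.swap)
    also have "\<dots> = (\<Sum>y\<in>ZPD P D. f y * (\<Sum>a\<in>ZPD P D. K ((dotp D a y - dotp D a x) mod int P)))"
      by (simp add: sum_distrib_left[symmetric] T)
    finally show ?thesis .
  qed
  also have "\<dots> = f x * (\<Sum>a\<in>ZPD P D. K ((dotp D a x - dotp D a x) mod int P))"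
  proof -
    have "(\<Sum>y\<in>ZPD P D. f y * (\<Sum>a\<in>ZPD P D. K ((dotp D a y - dotp D a x) mod int P)))
        = f x * (\<Sum>a\<in>ZPD P D. K ((dotp D a x - dotp D a x) mod int P)) +
          (\<Sum>y\<in>ZPD P D - {x}. f y * (\<Sum>a\<in>ZPD P D. K ((dotp D a y - dotp D a x) mod int P)))"
      by (rule sum.remove[OF finD x])
    also have "(\<Sum>y\<in>ZPD P D - {x}. f y * (\<Sum>a\<in>ZPD P D. K ((dotp D a y - dotp D a x) mod int P))) = 0"
      using avg[OF p x _ _ K0] by (intro sum.neutral) auto
    finally show ?thesis by simp
  qed
  also have "(\<Sum>a\<in>ZPD P D. K ((dotp D a x - dotp D a x) mod int P)) = real (P ^ D) * G"
    using cardD KG by simp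
  also have "cD * cD * (f x * (real (P ^ D) * G)) = f x * G"
  proof -
    have "cD * cD * real (P ^ D) = 1"
      unfolding cD_def using P by (simp add: power_mult_distrib[symmetric] field_simps)
    then show ?thesis by (simp add: algebra_simps)
  qed
  finally show ?thesis unfolding cD_def G_def .
qed


theorem theorem2:
  fixes P D :: nat and g r :: "int \<Rightarrow> real"
  assumes "prime P" and "D \<ge> 1"
    and "(\<Sum>b\<in>ZP P. g b) = 0"
    and "(\<Sum>b\<in>ZP P. \<bar>g b\<bar>^2) = 1"
    and "(\<Sum>b\<in>ZP P. \<bar>r b\<bar>^2) = 1"
    and "Cgr P g r \<noteq> 0"
  shows "\<forall>f :: (nat \<Rightarrow> int) \<Rightarrow> real. \<forall>x\<in>ZPD P D.
           complex_of_real (f x) =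
             inverse (Cgr P g r) *
             Snet P D g (\<lambda>a b. complex_of_real (ridgelet P D r f a b)) x"
proof (intro allI ballI)
  fix f :: "(nat \<Rightarrow> int) \<Rightarrow> real" and x assume x: "x \<in> ZPD P D"
  have P: "P > 0" using assms(1) prime_gt_0_nat by blast
  define G where "G = (\<Sum>b\<in>ZP P. g b * r b)"
  have C: "Cgr P g r = complex_of_real G" unfolding G_def by (rule parseval[OF P])
  have G0: "G \<noteq> 0" using assms(6) C by simp
  have "Snet P D g (\<lambda>a b. complex_of_real (ridgelet P D r f a b)) x
     = complex_of_real ((1 / sqrt (real P) ^ D) * (\<Sum>a\<in>ZPD P D. \<Sum>b\<in>ZP P. ridgelet P D r f a b * g ((dotp D a x - b) mod int P)))"
    unfolding Snet_def by simp
  also have "\<dots> = complex_of_real (f x * G)"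
    unfolding G_def by (subst main_real[OF assms(1) assms(3) x]) simp
  finally show "complex_of_real (f x) = inverse (Cgr P g r) * Snet P D g (\<lambda>a b. complex_of_real (ridgelet P D r f a b)) x"
    using G0 unfolding C by (simp add: field_simps)
qed

end
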